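(* Let $\mathbf{k}$ be an algebraically closed field, let $K_0(\mathrm{Stck}_{\mathbf{k}})$ be the Grothendieck ring of algebraic stacks of finite type over $\mathbf{k}$ with affine automorphism group schemes, let $\mathbb{L}$ be the class of the affine line and $q=\mathbb{L}^{-1}$. Let $b\in K_0(\mathrm{Stck}_{\mathbf{k}})$, let $m\in\mathbb{Z}$ and let $n$ be a nonzero integer, and put $$a=\frac{b\,q^{m}}{1-q^{n}}\in K_0(\mathrm{Stck}_{\mathbf{k}}).$$ Write $\zeta_b(T)=1+\sum_{k\ge1}\sigma^k b\,T^k$. Then $$\zeta_{a}(T)=1+\sum_{k=1}^\infty\left(\sum_{\underline{k}=(k_1,\dots,k_s):\ \sum_{j=1}^s jk_j=k} R_{k_1,k_2,\ldots,k_s}(q^{n},q^{2n},\ldots,q^{sn})\prod_{j=1}^s(\sigma^j b)^{k_j}\right)q^{km}T^k,$$ where the inner sum runs over all partitions $\underline{k}=(k_1,\dots,k_s)$ (with $k_j\ge 0$) of the integer $k$.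
   Context: $K_0(\mathrm{Stck}_{\mathbf{k}})$ is the abelian group generated by classes $[X]$ of such stacks modulo: $[X]$ depends only on the isomorphism class; $[X]=[Y]+[U]$ for $Y$ a closed substack with complement $U$; $[E]=\mathbb{L}^r[X]$ for a vector bundle $E\to X$ of constant rank $r$; multiplication is given by the fibred product. In this ring $\mathbb{L}$ and $\mathbb{L}^j-1$ ($j\ge1$) are invertible, and the natural map from the Grothendieck ring $K_0(\mathcal{V}_{\mathbf{k}})$ of quasi-projective varieties localized at $\mathbb{L}$ and all $\mathbb{L}^j-1$ is an isomorphism onto $K_0(\mathrm{Stck}_{\mathbf{k}})$. A pre-$\lambda$ structure on a ring $R$ assigns to each $a\in R$ a series $\lambda_a(T)\in 1+T R[[T]]$ with $\lambda_a(T)\equiv 1+aT \bmod T^2$ and $\lambda_{a+b}(T)=\lambda_a(T)\lambda_b(T)$. On $K_0(\mathcal{V}_{\mathbf{k}})$ the Kapranov zeta function is $\zeta_{[X]}(T)=1+\sum_{k\ge1}[S^kX]^*T^k$, where $[S^kX]^*=\sum_{\{k_i\}:\sum ik_i=k}[((\prod_i X^{k_i})\setminus\Delta)/\prod_i S_{k_i}]$, $\Delta$ being the large diagonal (tuples with two coinciding points); in characteristic zero this equals the class of the symmetric power $X^k/S_k$. It satisfies $\zeta_{\mathbb{L}^sX}(T)=\zeta_X(\mathbb{L}^sT)$. Here $\zeta$ denotes the extension (due to Ekedahl) of this pre-$\lambda$ structure to $K_0(\mathrm{Stck}_{\mathbf{k}})$, i.e. the pre-$\lambda$ structure $a\mapsto\zeta_a(T)$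 on $K_0(\mathrm{Stck}_{\mathbf{k}})$ agreeing with the Kapranov zeta function on classes of varieties and satisfying $\zeta_{\mathbb{L}^s a}(T)=\zeta_a(\mathbb{L}^sT)$ for all $s\in\mathbb{Z}$. For nonnegative integers $n_1,\dots,n_s$, $R_{n_1,\ldots,n_s}(q_1,\ldots,q_s)$ is the rational function whose Taylor expansion is $$\sum_{\{i^{(j)}_r\}}\prod_{j=1}^s\prod_{r=1}^{n_j} q_j^{\,i^{(j)}_r},$$ the sum running over all collections of integers $i^{(j)}_r\ge0$ ($1\le j\le s$, $1\le r\le n_j$) with $i^{(j)}_1<i^{(j)}_2<\dots<i^{(j)}_{n_j}$ for each $j$ and $i^{(j_1)}_{r_1}\ne i^{(j_2)}_{r_2}$ whenever $(j_1,r_1)\ne(j_2,r_2)$. (Its denominator is a product of factors of the form $1-$monomial, so its value at $q^n,\dots,q^{sn}$ is a well-defined element of $K_0(\mathrm{Stck}_{\mathbf{k}})$.) *)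

theory Defs
  imports "HOL-Computational_Algebra.Computational_Algebra"
begin

text \<open>Integer powers of an invertible element L with inverse q (L * q = 1).\<close>
definition zpow :: "'a::comm_ring_1 \<Rightarrow> 'a \<Rightarrow> int \<Rightarrow> 'a" where
  "zpow L q s = (if s \<ge> 0 then L ^ nat s else q ^ nat (- s))"

definition fps_rescale :: "'a::comm_ring_1 \<Rightarrow> 'a fps \<Rightarrow> 'a fps" where
  "fps_rescale c f = Abs_fps (\<lambda>k. c ^ k * f $ k)"

text \<open>Abstract setting: a commutative ring with an element L (class of the affine line)
  that is invertible with inverse q, such that all L^j - 1 (j >= 1) are invertible,
  together with a pre-lambda structure zeta satisfying zeta_(L^s a)(T) = zeta_a(L^s T).\<close>
definition stack_zeta_setting :: "'a::comm_ring_1 \<Rightarrow> 'a \<Rightarrow> ('a \<Rightarrow> 'a fps) \<Rightarrow> bool" where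
  "stack_zeta_setting L q \<zeta> \<longleftrightarrow>
     L * q = 1 \<and>
     (\<forall>j::nat. j \<ge> 1 \<longrightarrow> (\<exists>u. (L ^ j - 1) * u = 1)) \<and>
     (\<forall>a. \<zeta> a $ 0 = 1 \<and> \<zeta> a $ 1 = a) \<and>
     (\<forall>a b. \<zeta> (a + b) = \<zeta> a * \<zeta> b) \<and>
     (\<forall>a s. \<zeta> (zpow L q s * a) = fps_rescale (zpow L q s) (\<zeta> a))"

definition R_index :: "(nat \<Rightarrow> nat) \<Rightarrow> nat \<Rightarrow> (nat \<times> nat) set" where
  "R_index kk s = {(j, r). 1 \<le> j \<and> j \<le> s \<and> 1 \<le> r \<and> r \<le> kk j}"

text \<open>Admissible collections (i^(j)_r): strictly increasing in r for each j,
  pairwise distinct overall; represented as functions vanishing off the index set.\<close>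
definition R_collections :: "(nat \<Rightarrow> nat) \<Rightarrow> nat \<Rightarrow> (nat \<times> nat \<Rightarrow> nat) set" where
  "R_collections kk s = {i. (\<forall>p. p \<notin> R_index kk s \<longrightarrow> i p = 0) \<and>
      (\<forall>j r r'. (j, r) \<in> R_index kk s \<longrightarrow> (j, r') \<in> R_index kk s \<longrightarrow> r < r' \<longrightarrow> i (j, r) < i (j, r')) \<and>
      inj_on i (R_index kk s)}"

text \<open>The Taylor series of R_{kk 1,...,kk s}(q_1,...,q_s) after substituting q_j := x^j:
  coefficient of x^d counts collections with sum_j sum_r j * i^(j)_r = d.\<close>
definition R_series :: "(nat \<Rightarrow> nat) \<Rightarrow> nat \<Rightarrow> int fps" where
  "R_series kk s = Abs_fps (\<lambda>d. int (card {i \<in> R_collections kk s.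
      (\<Sum>p\<in>R_index kk s. fst p * i p) = d}))"

text \<open>Value at x = y of a power series which is a rational function N/D with denominator
  D a product of factors 1 - x^e (e >= 1).\<close>
definition rat_eval :: "int fps \<Rightarrow> 'a::comm_ring_1 \<Rightarrow> 'a" where
  "rat_eval f y = (THE v. \<exists>N es. (\<forall>e\<in>set es. e \<ge> 1) \<and>
      fps_of_poly N = fps_of_poly (prod_list (map (\<lambda>e. 1 - monom 1 e) es)) * f \<and>
      poly (map_poly of_int (prod_list (map (\<lambda>e. 1 - monom 1 e) es))) y * v
        = poly (map_poly of_int N) y)"

definition partitions_of :: "nat \<Rightarrow> (nat \<Rightarrow> nat) set" where
  "partitions_of k = {kk. (\<forall>j. (j < 1 \<or> j > k) \<longrightarrow> kk j = 0) \<and> (\<Sum>j=1..k. j * kk j) = k}"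

end

theory Submission
  imports Defs
begin


lemma mpi_mult: "map_poly (of_int::int\<Rightarrow>'a::comm_ring_1) (p*q) = map_poly of_int p * map_poly of_int q"
  by (simp add: poly_eq_iff coeff_map_poly coeff_mult of_int_sum)
lemma mpi_add: "map_poly (of_int::int\<Rightarrow>'a::comm_ring_1) (p+q) = map_poly of_int p + map_poly of_int q"
  by (simp add: poly_eq_iff coeff_map_poly)
lemma mpi_diff: "map_poly (of_int::int\<Rightarrow>'a::comm_ring_1) (p-q) = map_poly of_int p - map_poly of_int q"
  by (simp add: poly_eq_iff coeff_map_poly)
lemma mpi_monom: "map_poly (of_int::int\<Rightarrow>'a::comm_ring_1) (monom c e) = monom (of_int c) e"
  by (simp add: map_poly_monom)

definition Dp :: "nat list \<Rightarrow> int poly" where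
  "Dp es = prod_list (map (\<lambda>e. 1 - monom 1 e) es)"

lemma ev_Dp: "poly (map_poly (of_int::int\<Rightarrow>'a::comm_ring_1) (Dp es)) y = prod_list (map (\<lambda>e. 1 - y^e) es)"
  by (induction es) (simp_all add: Dp_def mpi_mult mpi_diff mpi_monom poly_monom)

definition good :: "'a::comm_ring_1 \<Rightarrow> bool" where
  "good y \<longleftrightarrow> (\<forall>e::nat. e \<ge> 1 \<longrightarrow> (\<exists>u. (1 - y^e) * u = 1))"

lemma good_Dp: assumes "good y" "\<forall>e\<in>set es. e \<ge> 1"
  shows "\<exists>u. prod_list (map (\<lambda>e. 1 - y^e) es) * u = 1"
  using assms(2)
proof (induction es)
  case Nil then show ?case by simp
next
  case (Cons e es)
  then obtain u where u: "prod_list (map (\<lambda>e. 1 - y^e) es) * u = 1" by auto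
  from Cons.prems assms(1) obtain w where w: "(1 - y^e) * w = 1" unfolding good_def by auto
  have "prod_list (map (\<lambda>e. 1 - y^e) (e#es)) * (u*w) = ((1 - y^e) * w) * (prod_list (map (\<lambda>e. 1 - y^e) es) * u)"
    by (simp add: algebra_simps)
  then show ?case using u w by auto
qed

definition RE :: "'a::comm_ring_1 \<Rightarrow> int fps \<Rightarrow> 'a \<Rightarrow> bool" where
  "RE y f v \<longleftrightarrow> (\<exists>es N. (\<forall>e\<in>set es. e \<ge> 1) \<and> fps_of_poly N = fps_of_poly (Dp es) * f \<and>
      poly (map_poly of_int (Dp es)) y * v = poly (map_poly of_int N) y)"

lemma RE_rat_eval: assumes "good y" "RE y f v" shows "rat_eval f y = v"
proof -
  from assms(2) obtain es N where es: "\<forall>e\<in>set es. e \<ge> 1" and N: "fps_of_poly N = fps_of_poly (Dp es) * f"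
    and v: "poly (map_poly of_int (Dp es)) y * v = poly (map_poly of_int N) y" unfolding RE_def by blast
  show ?thesis unfolding rat_eval_def
  proof (rule the_equality)
    show "\<exists>N es. (\<forall>e\<in>set es. e \<ge> 1) \<and>
      fps_of_poly N = fps_of_poly (prod_list (map (\<lambda>e. 1 - monom 1 e) es)) * f \<and>
      poly (map_poly of_int (prod_list (map (\<lambda>e. 1 - monom 1 e) es))) y * v
        = poly (map_poly of_int N) y" using es N v unfolding Dp_def by blast
  next
    fix v' assume "\<exists>N es. (\<forall>e\<in>set es. e \<ge> 1) \<and>
      fps_of_poly N = fps_of_poly (prod_list (map (\<lambda>e. 1 - monom 1 e) es)) * f \<and>
      poly (map_poly of_int (prod_list (map (\<lambda>e. 1 - monom 1 e) es))) y * v'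
        = poly (map_poly of_int N) y"
    then obtain es' N' where es': "\<forall>e\<in>set es'. e \<ge> 1" and N': "fps_of_poly N' = fps_of_poly (Dp es') * f"
      and v': "poly (map_poly of_int (Dp es')) y * v' = poly (map_poly of_int N') y" unfolding Dp_def by blast
    have "fps_of_poly (N' * Dp es) = fps_of_poly (N * Dp es')"
      by (simp add: fps_of_poly_mult N N' algebra_simps)
    hence eq: "N' * Dp es = N * Dp es'" by (simp add: fps_of_poly_eq_iff)
    define D where "D = poly (map_poly (of_int::int\<Rightarrow>'a) (Dp es)) y"
    define D' where "D' = poly (map_poly (of_int::int\<Rightarrow>'a) (Dp es')) y"
    have "poly (map_poly (of_int::int\<Rightarrow>'a) (N' * Dp es)) y = poly (map_poly of_int (N * Dp es')) y"
      using eq by simp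
    hence "D' * v' * D = D * v * D'" using v v' by (simp add: mpi_mult D_def D'_def)
    hence e2: "(D * D') * v' = (D * D') * v" by (simp add: algebra_simps)
    obtain u where u: "D * u = 1" using good_Dp[OF assms(1) es] by (auto simp: D_def ev_Dp)
    obtain u' where u': "D' * u' = 1" using good_Dp[OF assms(1) es'] by (auto simp: D'_def ev_Dp)
    have "(u * u') * ((D * D') * v') = (u * u') * ((D * D') * v)" using e2 by simp
    moreover have "(u*u') * (D*D') = 1" using u u' by (simp add: algebra_simps)
    ultimately show "v' = v" by (metis mult.assoc mult_1)
  qed
qed



lemma RE_0: "RE y 0 0"
  unfolding RE_def by (rule exI[of _ "[]"], rule exI[of _ 0]) (simp add: Dp_def)

lemma RE_1: "RE y 1 1"
  unfolding RE_def by (rule exI[of _ "[]"], rule exI[of _ 1]) (simp add: Dp_def)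

lemma RE_add: assumes "RE y f v" "RE y g w" shows "RE y (f+g) (v+w)"
proof -
  from assms(1) obtain es N where es: "\<forall>e\<in>set es. e \<ge> 1" and N: "fps_of_poly N = fps_of_poly (Dp es) * f"
    and v: "poly (map_poly of_int (Dp es)) y * v = poly (map_poly of_int N) y" unfolding RE_def by blast
  from assms(2) obtain es' N' where es': "\<forall>e\<in>set es'. e \<ge> 1" and N': "fps_of_poly N' = fps_of_poly (Dp es') * g"
    and v': "poly (map_poly of_int (Dp es')) y * w = poly (map_poly of_int N') y" unfolding RE_def by blast
  have D: "Dp (es @ es') = Dp es * Dp es'" by (simp add: Dp_def)
  show ?thesis unfolding RE_def
  proof (intro exI conjI)
    show "\<forall>e\<in>set (es@es'). e \<ge> 1" using es es' by auto
    show "fps_of_poly (N * Dp es' + N' * Dp es) = fps_of_poly (Dp (es @ es')) * (f + g)"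
      by (simp add: D fps_of_poly_mult fps_of_poly_add N N' algebra_simps)
    show "poly (map_poly of_int (Dp (es @ es'))) y * (v + w) = poly (map_poly of_int (N * Dp es' + N' * Dp es)) y"
    proof -
      let ?D = "poly (map_poly (of_int::int\<Rightarrow>'a) (Dp es)) y" and ?D' = "poly (map_poly (of_int::int\<Rightarrow>'a) (Dp es')) y"
      have "?D * ?D' * (v + w) = (?D * v) * ?D' + (?D' * w) * ?D" by (simp add: algebra_simps)
      thus ?thesis using v v' by (simp add: D mpi_mult mpi_add)
    qed
  qed
qed

lemma RE_sum: assumes "finite A" "\<And>x. x \<in> A \<Longrightarrow> RE y (f x) (v x)"
  shows "RE y (\<Sum>x\<in>A. f x) (\<Sum>x\<in>A. v x)"
  using assms by (induction A rule: finite_induct) (auto intro: RE_add RE_0)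

lemma RE_X: assumes "RE y f v" shows "RE y (fps_X ^ e * f) (y ^ e * v)"
proof -
  from assms(1) obtain es N where es: "\<forall>e\<in>set es. e \<ge> 1" and N: "fps_of_poly N = fps_of_poly (Dp es) * f"
    and v: "poly (map_poly of_int (Dp es)) y * v = poly (map_poly of_int N) y" unfolding RE_def by blast
  show ?thesis unfolding RE_def
  proof (intro exI conjI)
    show "\<forall>e\<in>set es. e \<ge> 1" using es by auto
    show "fps_of_poly (monom 1 e * N) = fps_of_poly (Dp es) * (fps_X ^ e * f)"
      by (simp add: fps_of_poly_mult fps_of_poly_monom' N algebra_simps)
    show "poly (map_poly of_int (Dp es)) y * (y ^ e * v) = poly (map_poly of_int (monom 1 e * N)) y"
      using v by (simp add: mpi_mult mpi_monom poly_monom)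
         (metis mult.assoc mult.commute)
  qed
qed

lemma RE_div: assumes "good y" "RE y g w" "k \<ge> 1" "fps_of_poly (1 - monom 1 k) * f = g"
  shows "\<exists>v. RE y f v \<and> (1 - y^k) * v = w"
proof -
  from assms(2) obtain es N where es: "\<forall>e\<in>set es. e \<ge> 1" and N: "fps_of_poly N = fps_of_poly (Dp es) * g"
    and v: "poly (map_poly of_int (Dp es)) y * w = poly (map_poly of_int N) y" unfolding RE_def by blast
  obtain u where u: "(1 - y^k) * u = 1" using assms(1,3) unfolding good_def by auto
  have D: "Dp (k # es) = (1 - monom 1 k) * Dp es" by (simp add: Dp_def)
  have "RE y f (u * w)" unfolding RE_def
  proof (intro exI conjI)
    show "\<forall>e\<in>set (k#es). e \<ge> 1" using es assms(3) by auto
    show "fps_of_poly N = fps_of_poly (Dp (k#es)) * f"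
      by (simp only: N D fps_of_poly_mult assms(4)[symmetric] mult_ac)
    have "poly (map_poly of_int (Dp (k#es))) y * (u * w) = ((1 - y^k) * u) * (poly (map_poly of_int (Dp es)) y * w)"
      by (simp add: D mpi_mult mpi_diff mpi_monom poly_monom algebra_simps)
    also have "\<dots> = poly (map_poly of_int N) y" using u v by simp
    finally show "poly (map_poly of_int (Dp (k#es))) y * (u * w) = poly (map_poly of_int N) y" .
  qed
  moreover have "(1 - y^k) * (u * w) = w" using u by (simp add: mult.assoc[symmetric])
  ultimately show ?thesis by blast
qed



definition Coll :: "(nat \<times> nat) set \<Rightarrow> (nat \<times> nat \<Rightarrow> nat) set" where
  "Coll I = {i. (\<forall>p. p \<notin> I \<longrightarrow> i p = 0) \<and>
      (\<forall>j r r'. (j, r) \<in> I \<longrightarrow> (j, r') \<in> I \<longrightarrow> r < r' \<longrightarrow> i (j, r) < i (j, r')) \<and>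
      inj_on i I}"

definition W :: "(nat \<times> nat) set \<Rightarrow> (nat \<times> nat \<Rightarrow> nat) \<Rightarrow> nat" where
  "W I i = (\<Sum>p\<in>I. fst p * i p)"

definition S :: "(nat \<times> nat) set \<Rightarrow> nat" where
  "S I = (\<Sum>p\<in>I. fst p)"

lemma shift_bij:
  fixes I I' Z :: "(nat \<times> nat) set" and h hinv :: "nat \<times> nat \<Rightarrow> nat \<times> nat"
  assumes finI: "finite I" and finI': "finite I'"
    and hI: "\<And>p'. p' \<in> I' \<Longrightarrow> h p' \<in> I - Z \<and> hinv (h p') = p' \<and> fst (h p') = fst p'"
    and hinvI: "\<And>p. p \<in> I - Z \<Longrightarrow> hinv p \<in> I' \<and> h (hinv p) = p"
    and ord1: "\<And>p1 p2. p1 \<in> I' \<Longrightarrow> p2 \<in> I' \<Longrightarrow> fst p1 = fst p2 \<Longrightarrow> snd p1 < snd p2 \<Longrightarrow> snd (h p1) < snd (h p2)"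
    and ord2: "\<And>p1 p2. p1 \<in> I - Z \<Longrightarrow> p2 \<in> I - Z \<Longrightarrow> fst p1 = fst p2 \<Longrightarrow> snd p1 < snd p2 \<Longrightarrow> snd (hinv p1) < snd (hinv p2)"
    and Zmin: "\<And>z p. z \<in> Z \<Longrightarrow> p \<in> I \<Longrightarrow> fst p = fst z \<Longrightarrow> \<not> snd p < snd z"
    and Zsub: "Z \<subseteq> I" and Zone: "\<And>z1 z2. z1 \<in> Z \<Longrightarrow> z2 \<in> Z \<Longrightarrow> z1 = z2"
  shows "card {i\<in>Coll I. (\<forall>z\<in>Z. i z = 0) \<and> (\<forall>p\<in>I-Z. i p \<noteq> 0) \<and> W I i = d}
       = card {i'\<in>Coll I'. W I' i' + S I' = d}"
proof -
  define F where "F i = (\<lambda>p'. if p' \<in> I' then i (h p') - 1 else 0)" for i :: "nat \<times> nat \<Rightarrow> nat"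
  define G where "G i' = (\<lambda>p. if p \<in> I - Z then i' (hinv p) + 1 else 0)" for i' :: "nat \<times> nat \<Rightarrow> nat"
  have hbij: "bij_betw h I' (I - Z)"
    by (rule bij_betw_byWitness[where f'=hinv]) (use hI hinvI in auto)
  have fsthinv: "fst (hinv p) = fst p" if "p \<in> I - Z" for p
    using hI[of "hinv p"] hinvI[OF that] by auto
  have reidx: "(\<Sum>p\<in>I - Z. g p) = (\<Sum>p'\<in>I'. g (h p'))" for g :: "nat \<times> nat \<Rightarrow> nat"
    using sum.reindex_bij_betw[OF hbij, of g] by simp
  have dropZ: "(\<Sum>p\<in>I. g p) = (\<Sum>p\<in>I - Z. g p)" if "\<And>z. z \<in> Z \<Longrightarrow> g z = 0" for g :: "nat \<times> nat \<Rightarrow> nat"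
    by (rule sum.mono_neutral_right) (use finI that Zsub in auto)
  let ?A = "{i\<in>Coll I. (\<forall>z\<in>Z. i z = 0) \<and> (\<forall>p\<in>I-Z. i p \<noteq> 0) \<and> W I i = d}"
  let ?B = "{i'\<in>Coll I'. W I' i' + S I' = d}"
  have "bij_betw F ?A ?B"
  proof (rule bij_betw_byWitness[where f'=G])
    show "\<forall>i\<in>?A. G (F i) = i"
    proof
      fix i assume i: "i \<in> ?A"
      show "G (F i) = i"
      proof
        fix p show "G (F i) p = i p"
        proof (cases "p \<in> I - Z")
          case True
          then show ?thesis using hinvI[OF True] i by (auto simp: G_def F_def)
        next
          case False
          then show ?thesis using i by (cases p) (auto simp: G_def Coll_def)
        qed
      qed
    qed
    show "\<forall>i'\<in>?B. F (G i') = i'"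
    proof
      fix i' assume i': "i' \<in> ?B"
      show "F (G i') = i'"
      proof
        fix p show "F (G i') p = i' p"
          using hI[of p] i' by (cases p) (auto simp: G_def F_def Coll_def)
      qed
    qed
    show "F ` ?A \<subseteq> ?B"
    proof
      fix x assume "x \<in> F ` ?A"
      then obtain i where i: "i \<in> ?A" and x: "x = F i" by auto
      have i0: "\<And>p. p \<notin> I \<Longrightarrow> i p = 0" and imono: "\<And>j r r'. (j, r) \<in> I \<Longrightarrow> (j, r') \<in> I \<Longrightarrow> r < r' \<Longrightarrow> i (j, r) < i (j, r')"
        and iinj: "inj_on i I" and iZ: "\<And>z. z \<in> Z \<Longrightarrow> i z = 0" and inz: "\<And>p. p \<in> I - Z \<Longrightarrow> i p \<noteq> 0"
        and iW: "W I i = d" using i unfolding Coll_def by auto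
      have "F i \<in> Coll I'" unfolding Coll_def
      proof (intro CollectI conjI allI impI)
        show "F i p = 0" if "p \<notin> I'" for p using that by (simp add: F_def)
        fix j r r' assume a: "(j, r) \<in> I'" "(j, r') \<in> I'" "r < r'"
        have h1: "h (j, r) = (j, snd (h (j, r)))" using hI[OF a(1)] by (metis prod.collapse fst_conv)
        have h2: "h (j, r') = (j, snd (h (j, r')))" using hI[OF a(2)] by (metis prod.collapse fst_conv)
        have "snd (h (j,r)) < snd (h (j,r'))" using ord1[OF a(1,2)] a(3) by simp
        hence "i (h (j,r)) < i (h (j,r'))" using imono[of j "snd (h (j, r))" "snd (h (j, r'))"] h1 h2 hI[OF a(1)] hI[OF a(2)]
          by (metis Diff_iff)
        moreover have "i (h (j,r)) \<noteq> 0" using inz hI[OF a(1)] by blast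
        ultimately show "F i (j, r) < F i (j, r')" using a by (simp add: F_def)
      next
        show "inj_on (F i) I'"
        proof (rule inj_onI)
          fix p1 p2 assume a: "p1 \<in> I'" "p2 \<in> I'" "F i p1 = F i p2"
          have "i (h p1) \<noteq> 0" "i (h p2) \<noteq> 0" using inz hI[OF a(1)] hI[OF a(2)] by blast+
          hence "i (h p1) = i (h p2)" using a by (simp add: F_def)
          hence "h p1 = h p2" using iinj hI[OF a(1)] hI[OF a(2)] by (auto dest: inj_onD)
          thus "p1 = p2" using hI[OF a(1)] hI[OF a(2)] by metis
        qed
      qed
      moreover have "W I' (F i) + S I' = d"
      proof -
        have "W I' (F i) + S I' = (\<Sum>p'\<in>I'. fst p' * (F i p') + fst p')"
          by (simp add: W_def S_def sum.distrib)
        also have "\<dots> = (\<Sum>p'\<in>I'. fst (h p') * i (h p'))"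
        proof (rule sum.cong[OF refl])
          fix p' assume p': "p' \<in> I'"
          have "i (h p') \<noteq> 0" using inz hI[OF p'] by blast
          then obtain c where "i (h p') = Suc c" using not0_implies_Suc by blast
          thus "fst p' * (F i p') + fst p' = fst (h p') * i (h p')" using p' hI[OF p'] by (simp add: F_def)
        qed
        also have "\<dots> = (\<Sum>p\<in>I - Z. fst p * i p)" using reidx[of "\<lambda>p. fst p * i p"] by simp
        also have "\<dots> = W I i" unfolding W_def by (rule dropZ[symmetric]) (simp add: iZ)
        finally show ?thesis using iW by simp
      qed
      ultimately show "x \<in> ?B" using x by simp
    qed
    show "G ` ?B \<subseteq> ?A"
    proof
      fix x assume "x \<in> G ` ?B"
      then obtain i' where i': "i' \<in> ?B" and x: "x = G i'" by auto
      have i0: "\<And>p. p \<notin> I' \<Longrightarrow> i' p = 0" and imono: "\<And>j r r'. (j, r) \<in> I' \<Longrightarrow> (j, r') \<in> I' \<Longrightarrow> r < r' \<Longrightarrow> i' (j, r) < i' (j, r')"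
        and iinj: "inj_on i' I'" and iW: "W I' i' + S I' = d" using i' unfolding Coll_def by auto
      have "G i' \<in> Coll I" unfolding Coll_def
      proof (intro CollectI conjI allI impI)
        show "G i' p = 0" if "p \<notin> I" for p using that by (simp add: G_def)
        fix j r r' assume a: "(j, r) \<in> I" "(j, r') \<in> I" "r < r'"
        have nZ': "(j, r') \<notin> Z" using Zmin[of "(j,r')" "(j,r)"] a by auto
        show "G i' (j, r) < G i' (j, r')"
        proof (cases "(j, r) \<in> Z")
          case True then show ?thesis using nZ' a by (simp add: G_def)
        next
          case False
          have m1: "(j,r) \<in> I - Z" "(j,r') \<in> I - Z" using False nZ' a by auto
          have hh1: "hinv (j, r) = (j, snd (hinv (j, r)))" using fsthinv[OF m1(1)] by (metis prod.collapse fst_conv)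
          have hh2: "hinv (j, r') = (j, snd (hinv (j, r')))" using fsthinv[OF m1(2)] by (metis prod.collapse fst_conv)
          have "snd (hinv (j,r)) < snd (hinv (j,r'))" using ord2[OF m1] a(3) by simp
          hence "i' (hinv (j,r)) < i' (hinv (j,r'))" using imono[of j "snd (hinv (j, r))" "snd (hinv (j, r'))"] hh1 hh2 hinvI[OF m1(1)] hinvI[OF m1(2)]
            by metis
          thus ?thesis using m1 by (simp add: G_def)
        qed
      next
        show "inj_on (G i') I"
        proof (rule inj_onI)
          fix p1 p2 assume a: "p1 \<in> I" "p2 \<in> I" "G i' p1 = G i' p2"
          show "p1 = p2"
          proof (cases "p1 \<in> Z \<or> p2 \<in> Z")
            case True
            then show ?thesis using a Zone by (auto simp: G_def split: if_splits)
          next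
            case False
            hence m: "p1 \<in> I - Z" "p2 \<in> I - Z" using a by auto
            hence "i' (hinv p1) = i' (hinv p2)" using a by (simp add: G_def)
            hence "hinv p1 = hinv p2" using iinj hinvI[OF m(1)] hinvI[OF m(2)] by (auto dest: inj_onD)
            thus ?thesis using hinvI[OF m(1)] hinvI[OF m(2)] by metis
          qed
        qed
      qed
      moreover have "W I (G i') = d"
      proof -
        have "W I (G i') = (\<Sum>p\<in>I - Z. fst p * G i' p)" unfolding W_def by (rule dropZ) (simp add: G_def)
        also have "\<dots> = (\<Sum>p'\<in>I'. fst (h p') * G i' (h p'))" using reidx[of "\<lambda>p. fst p * G i' p"] by simp
        also have "\<dots> = (\<Sum>p'\<in>I'. fst p' * i' p' + fst p')"
          by (rule sum.cong[OF refl]) (use hI in \<open>auto simp: G_def\<close>)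
        also have "\<dots> = W I' i' + S I'" by (simp add: W_def S_def sum.distrib)
        finally show ?thesis using iW by simp
      qed
      ultimately show "x \<in> ?A" using x by (auto simp: G_def)
    qed
  qed
  thus ?thesis by (rule bij_betw_same_card)
qed



lemma R_index_Sigma: "R_index kk s = (SIGMA j:{1..s}. {1..kk j})"
  unfolding R_index_def by auto

lemma finite_R_index: "finite (R_index kk s)"
  unfolding R_index_Sigma by auto

lemma fst_R_index: "p \<in> R_index kk s \<Longrightarrow> fst p \<ge> 1"
  unfolding R_index_def by auto

lemma S_R_index: "S (R_index kk s) = (\<Sum>j=1..s. j * kk j)"
proof -
  have "S (R_index kk s) = (\<Sum>(j,r)\<in>(SIGMA j:{1..s}. {1..kk j}). j)"
    unfolding S_def R_index_Sigma by (simp add: case_prod_beta)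
  also have "\<dots> = (\<Sum>j=1..s. \<Sum>r=1..kk j. j)" by (subst sum.Sigma) auto
  also have "\<dots> = (\<Sum>j=1..s. j * kk j)" by (simp add: mult.commute)
  finally show ?thesis .
qed

lemma R_coll_Coll: "R_collections kk s = Coll (R_index kk s)"
  unfolding R_collections_def Coll_def by simp

lemma finite_T:
  assumes "finite I" "\<And>p. p \<in> I \<Longrightarrow> fst p \<ge> 1"
  shows "finite {i\<in>Coll I. P i \<and> W I i = d}"
proof -
  have "{i\<in>Coll I. P i \<and> W I i = d} \<subseteq> {f. \<forall>x. (x \<in> I \<longrightarrow> f x \<in> {0..d}) \<and> (x \<notin> I \<longrightarrow> f x = 0)}"
  proof (safe)
    fix i x assume i: "i \<in> Coll I" "P i" "d = W I i"
    show "i x = 0" if "x \<notin> I" using i that unfolding Coll_def by (cases x) auto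
    assume x: "x \<in> I"
    have "i x \<le> fst x * i x" using assms(2)[OF x] by simp
    also have "\<dots> \<le> W I i" unfolding W_def by (rule member_le_sum) (use x assms(1) in auto)
    finally show "i x \<in> {0..W I i}" by simp
  qed
  moreover have "finite {f. \<forall>x. (x \<in> I \<longrightarrow> f x \<in> {0..d}) \<and> (x \<notin> I \<longrightarrow> f x = (0::nat))}"
    by (rule finite_set_of_finite_funs) (use assms in auto)
  ultimately show ?thesis by (rule finite_subset)
qed

lemma card_shift: "card {i'\<in>Coll I. W I i' + c = d} = (if c \<le> d then card {i'\<in>Coll I. W I i' = d - c} else 0)"
proof (cases "c \<le> d")
  case True
  hence "{i'\<in>Coll I. W I i' + c = d} = {i'\<in>Coll I. W I i' = d - c}" by auto
  then show ?thesis using True by simp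
next
  case False
  hence "{i'\<in>Coll I. W I i' + c = d} = {}" by auto
  then show ?thesis using False by simp
qed

definition dec :: "(nat \<Rightarrow> nat) \<Rightarrow> nat \<Rightarrow> nat \<Rightarrow> nat" where
  "dec kk j = kk(j := kk j - 1)"

lemma card_TA:
  "card {i\<in>Coll (R_index kk s). (\<forall>z\<in>{}. i z = 0) \<and> (\<forall>p\<in>R_index kk s - {}. i p \<noteq> 0) \<and> W (R_index kk s) i = d}
   = card {i'\<in>Coll (R_index kk s). W (R_index kk s) i' + S (R_index kk s) = d}"
  by (rule shift_bij[where h=id and hinv=id]) (auto simp: finite_R_index)

lemma card_TB:
  assumes j: "1 \<le> j" "j \<le> s" "kk j \<ge> 1"
  shows "card {i\<in>Coll (R_index kk s). (\<forall>z\<in>{(j,1)}. i z = 0) \<and> (\<forall>p\<in>R_index kk s - {(j,1)}. i p \<noteq> 0) \<and> W (R_index kk s) i = d}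
   = card {i'\<in>Coll (R_index (dec kk j) s). W (R_index (dec kk j) s) i' + S (R_index (dec kk j) s) = d}"
proof (rule shift_bij[where h="\<lambda>(a,b). if a = j then (a, b+1) else (a,b)" and hinv="\<lambda>(a,b). if a = j then (a, b-1) else (a,b)"])
  show "finite (R_index kk s)" "finite (R_index (dec kk j) s)" by (rule finite_R_index)+
  show "{(j, 1)} \<subseteq> R_index kk s" using j by (auto simp: R_index_def)
qed (use j in \<open>auto simp: R_index_def dec_def split: if_splits\<close>)



lemma sz_dec: assumes "j \<in> {1..s}" "kk j \<ge> 1"
  shows "(\<Sum>l=1..s. l * dec kk j l) + j = (\<Sum>l=1..s. l * kk l)"
proof -
  have "(\<Sum>l=1..s. l * kk l) = j * kk j + (\<Sum>l\<in>{1..s}-{j}. l * kk l)"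
    by (rule sum.remove) (use assms in auto)
  moreover have "(\<Sum>l=1..s. l * dec kk j l) = j * dec kk j j + (\<Sum>l\<in>{1..s}-{j}. l * dec kk j l)"
    by (rule sum.remove) (use assms in auto)
  moreover have "(\<Sum>l\<in>{1..s}-{j}. l * dec kk j l) = (\<Sum>l\<in>{1..s}-{j}. l * kk l)"
    by (rule sum.cong) (auto simp: dec_def)
  moreover have "j * dec kk j j + j = j * kk j" using assms(2)
  proof -
    obtain c where "kk j = Suc c" using assms(2) not0_implies_Suc by fastforce
    thus ?thesis by (simp add: dec_def)
  qed
  ultimately show ?thesis by simp
qed

lemma card_decomp:
  fixes kk :: "nat \<Rightarrow> nat" and s d :: nat
  defines "I \<equiv> R_index kk s" and "J \<equiv> {j\<in>{1..s}. kk j \<ge> 1}"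
  shows "card {i\<in>Coll I. W I i = d} =
     card {i\<in>Coll I. (\<forall>z\<in>{}. i z = 0) \<and> (\<forall>p\<in>I - {}. i p \<noteq> 0) \<and> W I i = d}
     + (\<Sum>j\<in>J. card {i\<in>Coll I. (\<forall>z\<in>{(j,1)}. i z = 0) \<and> (\<forall>p\<in>I - {(j,1)}. i p \<noteq> 0) \<and> W I i = d})"
proof -
  define TA where "TA = {i\<in>Coll I. (\<forall>z\<in>{}. i z = 0) \<and> (\<forall>p\<in>I - {}. i p \<noteq> 0) \<and> W I i = d}"
  define TB where "TB j = {i\<in>Coll I. (\<forall>z\<in>{(j,1)}. i z = 0) \<and> (\<forall>p\<in>I - {(j,1)}. i p \<noteq> 0) \<and> W I i = d}" for j
  have finI: "finite I" and fstI: "\<And>p. p \<in> I \<Longrightarrow> fst p \<ge> 1" unfolding I_def using finite_R_index by (auto simp: R_index_def)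
  have finTA: "finite TA" unfolding TA_def by (rule finite_subset[OF _ finite_T[OF finI fstI, of "\<lambda>_. True" d]]) auto
  have finTB: "finite (TB j)" for j unfolding TB_def by (rule finite_subset[OF _ finite_T[OF finI fstI, of "\<lambda>_. True" d]]) auto
  have finJ: "finite J" unfolding J_def by auto
  have j1I: "(j,1) \<in> I" if "j \<in> J" for j using that unfolding I_def J_def R_index_def by auto
  have eq: "{i\<in>Coll I. W I i = d} = TA \<union> (\<Union>j\<in>J. TB j)"
  proof (intro equalityI subsetI)
    fix i assume i: "i \<in> {i\<in>Coll I. W I i = d}"
    show "i \<in> TA \<union> (\<Union>j\<in>J. TB j)"
    proof (cases "\<forall>p\<in>I. i p \<noteq> 0")
      case True then show ?thesis using i by (auto simp: TA_def)
    next
      case False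
      then obtain j r where p: "(j,r) \<in> I" "i (j,r) = 0" by auto
      have jJ: "j \<in> J" and r1: "r \<ge> 1" using p(1) unfolding I_def J_def R_index_def by auto
      have r: "r = 1"
      proof (rule ccontr)
        assume "r \<noteq> 1"
        hence "i (j,1) < i (j,r)" using i j1I[OF jJ] p(1) r1 unfolding Coll_def by auto
        thus False using p(2) by simp
      qed
      have "\<forall>p\<in>I - {(j,1)}. i p \<noteq> 0"
      proof
        fix p' assume p': "p' \<in> I - {(j,1)}"
        show "i p' \<noteq> 0"
        proof
          assume "i p' = 0"
          hence "i p' = i (j,1)" using p r by simp
          hence "p' = (j,1)" using i p' j1I[OF jJ] unfolding Coll_def by (auto dest: inj_onD)
          thus False using p' by simp
        qed
      qed
      then show ?thesis using i p r jJ by (auto simp: TB_def)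
    qed
  next
    fix i assume "i \<in> TA \<union> (\<Union>j\<in>J. TB j)"
    thus "i \<in> {i\<in>Coll I. W I i = d}" unfolding TA_def TB_def by blast
  qed
  have disj1: "TA \<inter> (\<Union>j\<in>J. TB j) = {}"
  proof (rule ccontr)
    assume "TA \<inter> (\<Union>j\<in>J. TB j) \<noteq> {}"
    then obtain i j where ij: "i \<in> TA" "j \<in> J" "i \<in> TB j" by blast
    have "i (j,1) \<noteq> 0" using ij(1) j1I[OF ij(2)] unfolding TA_def by blast
    moreover have "i (j,1) = 0" using ij(3) unfolding TB_def by blast
    ultimately show False by simp
  qed
  have disj2: "TB j \<inter> TB j' = {}" if "j \<in> J" "j' \<in> J" "j \<noteq> j'" for j j'
  proof (rule ccontr)
    assume "TB j \<inter> TB j' \<noteq> {}"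
    then obtain i where ij: "i \<in> TB j" "i \<in> TB j'" by blast
    have "(j',1) \<in> I - {(j,1)}" using j1I[OF that(2)] that(3) by simp
    hence "i (j',1) \<noteq> 0" using ij(1) unfolding TB_def by blast
    moreover have "i (j',1) = 0" using ij(2) unfolding TB_def by blast
    ultimately show False by simp
  qed
  have "card {i\<in>Coll I. W I i = d} = card TA + card (\<Union>j\<in>J. TB j)"
    unfolding eq by (rule card_Un_disjoint) (use finTA finTB finJ disj1 in auto)
  also have "card (\<Union>j\<in>J. TB j) = (\<Sum>j\<in>J. card (TB j))"
    by (rule card_UN_disjoint) (use finJ finTB disj2 in auto)
  finally show ?thesis unfolding TA_def TB_def .
qed

lemma R_series_nth: "R_series kk s $ d = int (card {i\<in>Coll (R_index kk s). W (R_index kk s) i = d})"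
  unfolding R_series_def R_coll_Coll W_def by simp

lemma R_rec:
  fixes kk :: "nat \<Rightarrow> nat" and s :: nat
  defines "k \<equiv> (\<Sum>j=1..s. j * kk j)" and "J \<equiv> {j\<in>{1..s}. kk j \<ge> 1}"
  shows "R_series kk s = fps_X ^ k * R_series kk s + (\<Sum>j\<in>J. fps_X ^ (k - j) * R_series (dec kk j) s)"
proof (rule fps_ext)
  fix d
  have A: "int (card {i\<in>Coll (R_index kk s). (\<forall>z\<in>{}. i z = 0) \<and> (\<forall>p\<in>R_index kk s - {}. i p \<noteq> 0) \<and> W (R_index kk s) i = d})
     = (fps_X ^ k * R_series kk s) $ d"
    unfolding card_TA card_shift S_R_index fps_X_power_mult_nth R_series_nth k_def by simp
  have B: "int (card {i\<in>Coll (R_index kk s). (\<forall>z\<in>{(j,1)}. i z = 0) \<and> (\<forall>p\<in>R_index kk s - {(j,1)}. i p \<noteq> 0) \<and> W (R_index kk s) i = d})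
     = (fps_X ^ (k - j) * R_series (dec kk j) s) $ d" if jJ: "j \<in> J" for j
  proof -
    have "S (R_index (dec kk j) s) = k - j" using sz_dec[of j s kk] jJ unfolding S_R_index k_def J_def by auto
    thus ?thesis using jJ unfolding J_def
      by (subst card_TB) (auto simp: card_shift fps_X_power_mult_nth R_series_nth)
  qed
  have "R_series kk s $ d = int (card {i\<in>Coll (R_index kk s). (\<forall>z\<in>{}. i z = 0) \<and> (\<forall>p\<in>R_index kk s - {}. i p \<noteq> 0) \<and> W (R_index kk s) i = d})
     + (\<Sum>j\<in>J. int (card {i\<in>Coll (R_index kk s). (\<forall>z\<in>{(j,1)}. i z = 0) \<and> (\<forall>p\<in>R_index kk s - {(j,1)}. i p \<noteq> 0) \<and> W (R_index kk s) i = d}))"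
    unfolding R_series_nth J_def by (subst card_decomp) (simp add: of_nat_sum)
  also have "\<dots> = (fps_X ^ k * R_series kk s) $ d + (\<Sum>j\<in>J. (fps_X ^ (k - j) * R_series (dec kk j) s) $ d)"
    using A B by simp
  finally show "R_series kk s $ d = (fps_X ^ k * R_series kk s + (\<Sum>j\<in>J. fps_X ^ (k - j) * R_series (dec kk j) s)) $ d"
    by (simp add: fps_sum_nth)
qed



lemma R_series_zero: assumes "(\<Sum>j=1..s. j * kk j) = 0" shows "R_series kk s = 1"
proof -
  have "\<forall>j\<in>{1..s}. j * kk j = 0" using assms by simp
  hence z: "\<And>j. j \<in> {1..s} \<Longrightarrow> kk j = 0" by auto
  have I: "R_index kk s = {}" unfolding R_index_def using z by auto
  have C: "Coll {} = {\<lambda>_. 0}" unfolding Coll_def by auto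
  show ?thesis
    by (rule fps_ext) (simp add: R_series_nth I C W_def)
qed

lemma fps_1mX: "fps_of_poly (1 - monom 1 n) * f = f - fps_X ^ n * (f :: int fps)"
  by (simp add: fps_of_poly_diff fps_of_poly_monom' algebra_simps)

lemma R_RE: assumes "good y" shows "\<exists>v. RE y (R_series kk s) v"
proof -
  have "\<forall>kk. (\<Sum>j=1..s. j * kk j) = n \<longrightarrow> (\<exists>v. RE y (R_series kk s) v)" for n
  proof (induction n rule: less_induct)
    case (less n)
    show ?case
    proof (intro allI impI)
      fix kk assume n: "(\<Sum>j=1..s. j * kk j) = n"
      show "\<exists>v. RE y (R_series kk s) v"
      proof (cases "n = 0")
        case True
        then show ?thesis using R_series_zero[of kk s] n RE_1 by auto
      next
        case False
        define J where "J = {j\<in>{1..s}. kk j \<ge> 1}"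
        have "\<forall>j\<in>J. \<exists>v. RE y (R_series (dec kk j) s) v"
        proof
          fix j assume j: "j \<in> J"
          have "(\<Sum>l=1..s. l * dec kk j l) + j = n" using sz_dec[of j s kk] j n unfolding J_def by auto
          moreover have "j \<ge> 1" using j unfolding J_def by auto
          ultimately show "\<exists>v. RE y (R_series (dec kk j) s) v" using less.IH[of "(\<Sum>l=1..s. l * dec kk j l)"] by auto
        qed
        then obtain vf where vf: "\<And>j. j \<in> J \<Longrightarrow> RE y (R_series (dec kk j) s) (vf j)" by metis
        have "RE y (\<Sum>j\<in>J. fps_X ^ (n - j) * R_series (dec kk j) s) (\<Sum>j\<in>J. y ^ (n - j) * vf j)"
          by (rule RE_sum) (auto simp: J_def intro!: RE_X vf)
        moreover have "fps_of_poly (1 - monom 1 n) * R_series kk s = (\<Sum>j\<in>J. fps_X ^ (n - j) * R_series (dec kk j) s)"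
          using R_rec[of kk s] n unfolding fps_1mX J_def by (simp add: algebra_simps)
        moreover have "n \<ge> 1" using False by simp
        ultimately show ?thesis using RE_div[OF assms] by blast
      qed
    qed
  qed
  thus ?thesis by blast
qed

lemma R_eval_rec:
  fixes kk :: "nat \<Rightarrow> nat" and s :: nat and y :: "'a::comm_ring_1"
  assumes "good y" and n: "(\<Sum>j=1..s. j * kk j) = n" "n \<ge> 1"
  shows "(1 - y ^ n) * rat_eval (R_series kk s) y
       = (\<Sum>j\<in>{j\<in>{1..s}. kk j \<ge> 1}. y ^ (n - j) * rat_eval (R_series (dec kk j) s) y)"
proof -
  define J where "J = {j\<in>{1..s}. kk j \<ge> 1}"
  have vf: "RE y (R_series (dec kk j) s) (rat_eval (R_series (dec kk j) s) y)" for j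
    using R_RE[OF assms(1), of "dec kk j" s] RE_rat_eval[OF assms(1)] by auto
  have "RE y (\<Sum>j\<in>J. fps_X ^ (n - j) * R_series (dec kk j) s) (\<Sum>j\<in>J. y ^ (n - j) * rat_eval (R_series (dec kk j) s) y)"
    by (rule RE_sum) (auto simp: J_def intro: RE_X vf)
  moreover have "fps_of_poly (1 - monom 1 n) * R_series kk s = (\<Sum>j\<in>J. fps_X ^ (n - j) * R_series (dec kk j) s)"
    using R_rec[of kk s] n unfolding fps_1mX J_def by (simp add: algebra_simps)
  ultimately obtain v where v: "RE y (R_series kk s) v" "(1 - y ^ n) * v = (\<Sum>j\<in>J. y ^ (n - j) * rat_eval (R_series (dec kk j) s) y)"
    using RE_div[OF assms(1) _ n(2)] by blast
  have "rat_eval (R_series kk s) y = v" using RE_rat_eval[OF assms(1) v(1)] .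
  thus ?thesis using v(2) unfolding J_def by simp
qed



definition Psz :: "nat \<Rightarrow> nat \<Rightarrow> (nat \<Rightarrow> nat) set" where
  "Psz N k = {kk. (\<forall>j. (j < 1 \<or> j > N) \<longrightarrow> kk j = 0) \<and> (\<Sum>j=1..N. j * kk j) = k}"

lemma sum_extend:
  assumes "N' \<le> N" "\<And>j. j > N' \<Longrightarrow> kk j = 0"
  shows "(\<Sum>j=1..N. j * kk j) = (\<Sum>j=1..N'. j * (kk j :: nat))"
  by (rule sum.mono_neutral_right) (use assms in auto)

lemma Psz_big: assumes "k \<le> N" shows "Psz N k = partitions_of k"
proof (intro equalityI subsetI)
  fix kk assume kk: "kk \<in> Psz N k"
  have z: "kk j = 0" if "j > k" for j
  proof (cases "j > N")
    case True then show ?thesis using kk by (auto simp: Psz_def)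
  next
    case False
    show ?thesis
    proof (rule ccontr)
      assume "kk j \<noteq> 0"
      hence "j \<le> j * kk j" by simp
      also have "\<dots> \<le> (\<Sum>l=1..N. l * kk l)" by (rule member_le_sum) (use False that in auto)
      finally show False using kk that by (simp add: Psz_def)
    qed
  qed
  show "kk \<in> partitions_of k" using kk z sum_extend[OF assms, of kk] unfolding Psz_def partitions_of_def by auto
next
  fix kk assume kk: "kk \<in> partitions_of k"
  show "kk \<in> Psz N k" using kk sum_extend[OF assms, of kk] assms unfolding Psz_def partitions_of_def by auto
qed

lemma R_index_extend: assumes "N' \<le> N" "\<And>j. j > N' \<Longrightarrow> kk j = 0"
  shows "R_index kk N' = R_index kk N"
proof -
  have b: "j \<le> N'" if "1 \<le> r" "r \<le> kk j" for j r
    using assms(2)[of j] that by (cases "j \<le> N'") auto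
  show ?thesis
  proof (intro equalityI subsetI)
    fix p assume "p \<in> R_index kk N'" thus "p \<in> R_index kk N" using assms(1) unfolding R_index_def by (cases p) auto
  next
    fix p assume p: "p \<in> R_index kk N"
    obtain j r where pj: "p = (j, r)" by (cases p)
    have "j \<le> N'" using b p pj unfolding R_index_def by auto
    thus "p \<in> R_index kk N'" using p pj unfolding R_index_def by auto
  qed
qed

lemma R_series_extend: assumes "N' \<le> N" "\<And>j. j > N' \<Longrightarrow> kk j = 0"
  shows "R_series kk N' = R_series kk N"
  using R_index_extend[OF assms] by (simp add: R_series_def R_collections_def)

lemma prod_extend: fixes B :: "nat \<Rightarrow> 'a::comm_ring_1" assumes "N' \<le> N" "\<And>j. j > N' \<Longrightarrow> kk j = 0"
  shows "(\<Prod>j=1..N. B j ^ kk j) = (\<Prod>j=1..N'. (B j :: 'a::comm_ring_1) ^ kk j)"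
proof (rule prod.mono_neutral_right)
  show "finite {1..N}" by simp
  show "{1..N'} \<subseteq> {1..N}" using assms(1) by auto
  show "\<forall>i\<in>{1..N} - {1..N'}. B i ^ kk i = 1" using assms(2) by auto
qed

lemma finite_Psz: "finite (Psz N k)"
proof -
  have "Psz N k \<subseteq> {f. \<forall>x. (x \<in> {1..N} \<longrightarrow> f x \<in> {0..k}) \<and> (x \<notin> {1..N} \<longrightarrow> f x = 0)}"
  proof (safe)
    fix kk x assume kk: "kk \<in> Psz N k"
    show "kk x = 0" if "x \<notin> {1..N}"
    proof -
      have o: "x < 1 \<or> x > N" using that by auto
      have "\<forall>j. (j < 1 \<or> j > N) \<longrightarrow> kk j = 0" using kk unfolding Psz_def by simp
      from this[rule_format, OF o] show ?thesis .
    qed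
    assume x: "x \<in> {1..N}"
    have "kk x \<le> x * kk x" using x by simp
    also have "\<dots> \<le> (\<Sum>l=1..N. l * kk l)" by (rule member_le_sum) (use x in auto)
    finally show "kk x \<in> {0..k}" using kk unfolding Psz_def by simp
  qed
  moreover have "finite {f. \<forall>x. (x \<in> {1..N} \<longrightarrow> f x \<in> {0..k}) \<and> (x \<notin> {1..N} \<longrightarrow> f x = (0::nat))}"
    by (rule finite_set_of_finite_funs) auto
  ultimately show ?thesis by (rule finite_subset)
qed



lemma prod_dec: fixes B :: "nat \<Rightarrow> 'a::comm_ring_1"
  assumes "j \<in> {1..N}" "kk j \<ge> 1"
  shows "(\<Prod>l=1..N. B l ^ kk l) = B j * (\<Prod>l=1..N. B l ^ dec kk j l)"
proof -
  have "(\<Prod>l=1..N. B l ^ kk l) = B j ^ kk j * (\<Prod>l\<in>{1..N}-{j}. B l ^ kk l)"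
    by (rule prod.remove) (use assms in auto)
  moreover have "(\<Prod>l=1..N. B l ^ dec kk j l) = B j ^ dec kk j j * (\<Prod>l\<in>{1..N}-{j}. B l ^ dec kk j l)"
    by (rule prod.remove) (use assms in auto)
  moreover have "(\<Prod>l\<in>{1..N}-{j}. B l ^ dec kk j l) = (\<Prod>l\<in>{1..N}-{j}. B l ^ kk l)"
    by (rule prod.cong) (auto simp: dec_def)
  moreover have "B j ^ kk j = B j * B j ^ dec kk j j"
  proof -
    obtain c where "kk j = Suc c" using assms(2) not0_implies_Suc by fastforce
    thus ?thesis by (simp add: dec_def)
  qed
  ultimately show ?thesis by (simp add: mult.assoc)
qed

definition inc :: "(nat \<Rightarrow> nat) \<Rightarrow> nat \<Rightarrow> nat \<Rightarrow> nat" where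
  "inc kk j = kk(j := kk j + 1)"

lemma reindex_part:
  fixes g :: "(nat \<Rightarrow> nat) \<Rightarrow> 'a::comm_ring_1"
  assumes j: "j \<in> {1..k}"
  shows "(\<Sum>kk\<in>{kk\<in>Psz k k. 1 \<le> kk j}. g kk) = (\<Sum>kk'\<in>Psz k (k - j). g (inc kk' j))"
proof (rule sum.reindex_bij_witness[where i="\<lambda>kk'. inc kk' j" and j="\<lambda>kk. dec kk j"])
  fix kk assume kk: "kk \<in> {kk\<in>Psz k k. 1 \<le> kk j}"
  show "inc (dec kk j) j = kk" using kk by (auto simp: inc_def dec_def)
  show "g (inc (dec kk j) j) = g kk" using kk by (auto simp: inc_def dec_def)
  have s: "(\<Sum>l=1..k. l * dec kk j l) + j = k" using sz_dec[of j k kk] kk j unfolding Psz_def by auto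
  show "dec kk j \<in> Psz k (k - j)" using kk s unfolding Psz_def dec_def by auto
next
  fix kk' assume kk': "kk' \<in> Psz k (k - j)"
  show "dec (inc kk' j) j = kk'" by (auto simp: inc_def dec_def)
  have i1: "inc kk' j j \<ge> 1" by (simp add: inc_def)
  have "(\<Sum>l=1..k. l * dec (inc kk' j) j l) + j = (\<Sum>l=1..k. l * inc kk' j l)"
    by (rule sz_dec[where kk="inc kk' j", OF j i1])
  hence s: "(\<Sum>l=1..k. l * inc kk' j l) = k" using kk' j unfolding Psz_def
    by (simp add: inc_def dec_def)
  show "inc kk' j \<in> {kk\<in>Psz k k. 1 \<le> kk j}" using kk' s j unfolding Psz_def inc_def by auto
qed



definition Cf :: "'a::comm_ring_1 \<Rightarrow> (nat \<Rightarrow> 'a) \<Rightarrow> nat \<Rightarrow> 'a" where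
  "Cf y B k = (\<Sum>kk\<in>partitions_of k. rat_eval (R_series kk k) y * (\<Prod>j=1..k. B j ^ kk j))"

lemma Cf_big: assumes "k \<le> N"
  shows "Cf y B k = (\<Sum>kk\<in>Psz N k. rat_eval (R_series kk N) y * (\<Prod>j=1..N. B j ^ kk j))"
proof -
  have "Cf y B k = (\<Sum>kk\<in>Psz N k. rat_eval (R_series kk k) y * (\<Prod>j=1..k. B j ^ kk j))"
    unfolding Cf_def Psz_big[OF assms] ..
  also have "\<dots> = (\<Sum>kk\<in>Psz N k. rat_eval (R_series kk N) y * (\<Prod>j=1..N. B j ^ kk j))"
  proof (rule sum.cong[OF refl])
    fix kk assume "kk \<in> Psz N k"
    hence kk: "kk \<in> partitions_of k" using Psz_big[OF assms] by simp
    have z: "\<And>j. j > k \<Longrightarrow> kk j = 0" using kk unfolding partitions_of_def by auto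
    show "rat_eval (R_series kk k) y * (\<Prod>j=1..k. B j ^ kk j) = rat_eval (R_series kk N) y * (\<Prod>j=1..N. B j ^ kk j)"
      using R_series_extend[OF assms z] prod_extend[where B=B, OF assms z] by simp
  qed
  finally show ?thesis .
qed

lemma part_id:
  fixes y :: "'a::comm_ring_1" and B :: "nat \<Rightarrow> 'a"
  assumes gy: "good y" and k: "k \<ge> 1"
  shows "(1 - y ^ k) * Cf y B k = (\<Sum>j\<in>{1..k}. y ^ (k - j) * B j * Cf y B (k - j))"
proof -
  define V where "V kk = rat_eval (R_series kk k) y" for kk
  define M where "M kk = (\<Prod>j=1..k. B j ^ kk j)" for kk
  have "(1 - y ^ k) * Cf y B k = (\<Sum>kk\<in>Psz k k. ((1 - y ^ k) * V kk) * M kk)"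
    unfolding Cf_big[OF order_refl] V_def M_def by (simp add: sum_distrib_left mult.assoc)
  also have "\<dots> = (\<Sum>kk\<in>Psz k k. \<Sum>j\<in>{j\<in>{1..k}. kk j \<ge> 1}. y ^ (k - j) * V (dec kk j) * M kk)"
  proof (rule sum.cong[OF refl])
    fix kk assume kk: "kk \<in> Psz k k"
    have "(1 - y ^ k) * V kk = (\<Sum>j\<in>{j\<in>{1..k}. kk j \<ge> 1}. y ^ (k - j) * V (dec kk j))"
      unfolding V_def by (rule R_eval_rec[OF gy _ k]) (use kk in \<open>simp add: Psz_def\<close>)
    thus "(1 - y ^ k) * V kk * M kk = (\<Sum>j\<in>{j\<in>{1..k}. kk j \<ge> 1}. y ^ (k - j) * V (dec kk j) * M kk)"
      by (simp add: sum_distrib_right)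
  qed
  also have "\<dots> = (\<Sum>kk\<in>Psz k k. \<Sum>j\<in>{1..k}. if 1 \<le> kk j then y ^ (k - j) * V (dec kk j) * M kk else 0)"
    by (rule sum.cong[OF refl]) (rule sum.inter_filter, simp)
  also have "\<dots> = (\<Sum>j\<in>{1..k}. \<Sum>kk\<in>Psz k k. if 1 \<le> kk j then y ^ (k - j) * V (dec kk j) * M kk else 0)"
    by (rule sum.swap)
  also have "\<dots> = (\<Sum>j\<in>{1..k}. \<Sum>kk\<in>{kk\<in>Psz k k. 1 \<le> kk j}. y ^ (k - j) * V (dec kk j) * M kk)"
    by (rule sum.cong[OF refl]) (rule sum.inter_filter[symmetric], rule finite_Psz)
  also have "\<dots> = (\<Sum>j\<in>{1..k}. \<Sum>kk'\<in>Psz k (k - j). y ^ (k - j) * V (dec (inc kk' j) j) * M (inc kk' j))"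
    by (rule sum.cong[OF refl]) (rule reindex_part)
  also have "\<dots> = (\<Sum>j\<in>{1..k}. y ^ (k - j) * B j * Cf y B (k - j))"
  proof (rule sum.cong[OF refl])
    fix j assume j: "j \<in> {1..k}"
    have "(\<Sum>kk'\<in>Psz k (k - j). y ^ (k - j) * V (dec (inc kk' j) j) * M (inc kk' j))
        = (\<Sum>kk'\<in>Psz k (k - j). y ^ (k - j) * B j * (V kk' * M kk'))"
    proof (rule sum.cong[OF refl])
      fix kk' assume kk': "kk' \<in> Psz k (k - j)"
      have d: "dec (inc kk' j) j = kk'" by (auto simp: inc_def dec_def)
      have "M (inc kk' j) = B j * M (dec (inc kk' j) j)"
        unfolding M_def by (rule prod_dec[OF j]) (simp add: inc_def)
      thus "y ^ (k - j) * V (dec (inc kk' j) j) * M (inc kk' j) = y ^ (k - j) * B j * (V kk' * M kk')"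
        by (simp add: d algebra_simps)
    qed
    also have "\<dots> = y ^ (k - j) * B j * Cf y B (k - j)"
      unfolding Cf_big[where k="k - j" and N=k, OF diff_le_self] V_def M_def by (simp add: sum_distrib_left)
    finally show "(\<Sum>kk'\<in>Psz k (k - j). y ^ (k - j) * V (dec (inc kk' j) j) * M (inc kk' j)) = y ^ (k - j) * B j * Cf y B (k - j)" .
  qed
  finally show ?thesis .
qed



lemma zpow_nat_mult: "zpow L q (int k * s) = (zpow L q s) ^ k"
proof (cases "s \<ge> 0")
  case True
  have "nat (int k * s) = k * nat s" using True by (simp add: nat_mult_distrib)
  hence "zpow L q (int k * s) = L ^ (k * nat s)" using True by (simp add: zpow_def)
  also have "\<dots> = (L ^ nat s) ^ k" by (metis power_mult mult.commute)
  finally show ?thesis using True by (simp add: zpow_def)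
next
  case False
  show ?thesis
  proof (cases "k = 0")
    case True then show ?thesis by (simp add: zpow_def)
  next
    case k: False
    have neg: "\<not> int k * s \<ge> 0" using False k by (simp add: mult_le_0_iff zero_le_mult_iff)
    have "- (int k * s) = int k * (- s)" by simp
    moreover have "nat (int k * (- s)) = nat (int k) * nat (- s)" by (rule nat_mult_distrib) simp
    ultimately have "nat (- (int k * s)) = k * nat (- s)" by simp
    hence "zpow L q (int k * s) = q ^ (k * nat (- s))" using neg by (simp add: zpow_def)
    also have "\<dots> = (q ^ nat (- s)) ^ k" by (metis power_mult mult.commute)
    finally show ?thesis using False by (simp add: zpow_def)
  qed
qed

lemma zpow_good: assumes "stack_zeta_setting L q \<zeta>" "n \<noteq> 0"
  shows "good (zpow L q (- n))"
  unfolding good_def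
proof (intro allI impI)
  fix e :: nat assume e: "e \<ge> 1"
  have Lq: "L * q = 1" and inv: "\<And>j::nat. j \<ge> 1 \<Longrightarrow> \<exists>u. (L ^ j - 1) * u = 1"
    using assms(1) unfolding stack_zeta_setting_def by auto
  show "\<exists>u. (1 - zpow L q (- n) ^ e) * u = 1"
  proof (cases "n > 0")
    case True
    define N where "N = nat n * e"
    have N1: "N \<ge> 1" using True e by (simp add: N_def)
    have y: "zpow L q (- n) ^ e = q ^ N" using True by (simp add: zpow_def N_def power_mult)
    obtain u where u: "(L ^ N - 1) * u = 1" using inv[OF N1] by blast
    have "(1 - q ^ N) * (L ^ N * u) = (L ^ N - (L * q) ^ N) * u" by (simp add: algebra_simps power_mult_distrib)
    also have "\<dots> = 1" using u Lq by simp
    finally show ?thesis using y by metis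
  next
    case False
    hence nn: "n < 0" using assms(2) by simp
    define N where "N = nat (- n) * e"
    have N1: "N \<ge> 1" using nn e by (simp add: N_def)
    have y: "zpow L q (- n) ^ e = L ^ N" using nn by (simp add: zpow_def N_def power_mult)
    obtain u where u: "(L ^ N - 1) * u = 1" using inv[OF N1] by blast
    have "(1 - L ^ N) * (- u) = 1" using u by (simp add: algebra_simps)
    thus ?thesis using y by metis
  qed
qed

lemma reindex_rev: fixes k :: nat and f :: "nat \<Rightarrow> 'a::comm_monoid_add" shows "(\<Sum>i\<in>{0..<k}. f i) = (\<Sum>j\<in>{1..k}. f (k - j))"
  by (rule sum.reindex_bij_witness[where i="\<lambda>j. k - j" and j="\<lambda>i. k - i"]) auto



lemma Cf_0: assumes "good y" shows "Cf y B 0 = 1"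
proof -
  have P: "partitions_of 0 = {\<lambda>_. 0}" unfolding partitions_of_def by auto
  have "R_series (\<lambda>_. 0) 0 = 1" by (rule R_series_zero) simp
  moreover have "rat_eval (1::int fps) y = 1" by (rule RE_rat_eval[OF assms RE_1])
  ultimately show ?thesis unfolding Cf_def P by simp
qed

theorem mainTheorem1:
  fixes L q :: "'a::comm_ring_1" and \<zeta> :: "'a \<Rightarrow> 'a fps"
    and a b :: 'a and m n :: int
  assumes "stack_zeta_setting L q \<zeta>"
    and "n \<noteq> 0"
    and "a * (1 - zpow L q (- n)) = b * zpow L q (- m)"
  shows "\<forall>k::nat. k \<ge> 1 \<longrightarrow> \<zeta> a $ k =
     (\<Sum>kk\<in>partitions_of k. rat_eval (R_series kk k) (zpow L q (- n)) *
        (\<Prod>j=1..k. (\<zeta> b $ j) ^ kk j)) * zpow L q (- (int k * m))"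
proof -
  define y where "y = zpow L q (- n)"
  define w where "w = zpow L q (- m)"
  define A where "A k = \<zeta> a $ k" for k
  define B where "B j = \<zeta> b $ j" for j
  have gy: "good y" unfolding y_def by (rule zpow_good[OF assms(1,2)])
  have st: "\<And>a. \<zeta> a $ 0 = 1" "\<And>a b. \<zeta> (a + b) = \<zeta> a * \<zeta> b"
     "\<And>a s. \<zeta> (zpow L q s * a) = fps_rescale (zpow L q s) (\<zeta> a)"
    using assms(1) unfolding stack_zeta_setting_def by auto
  have aeq: "a = y * a + w * b" using assms(3) unfolding y_def w_def by (simp add: algebra_simps)
  have z: "\<zeta> a = fps_rescale y (\<zeta> a) * fps_rescale w (\<zeta> b)"
    by (subst aeq) (simp add: st(2) st(3) y_def w_def)
  have rec: "A k = (\<Sum>i=0..k. (y ^ i * A i) * (w ^ (k - i) * B (k - i)))" for k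
    unfolding A_def B_def by (subst z) (simp add: fps_mult_nth fps_rescale_def)
  have B0: "B 0 = 1" unfolding B_def by (rule st(1))
  have main: "A k = Cf y B k * w ^ k" for k
  proof (induction k rule: less_induct)
    case (less k)
    show ?case
    proof (cases "k = 0")
      case True then show ?thesis using st(1) by (simp add: A_def Cf_0[OF gy])
    next
      case False
      then obtain k' where k': "k = Suc k'" using not0_implies_Suc by blast
      have "A k = (\<Sum>i\<in>{0..<k}. (y ^ i * A i) * (w ^ (k - i) * B (k - i))) + y ^ k * A k"
        using rec[of k] unfolding k' by (simp only: sum.atLeast0_atMost_Suc atLeastLessThanSuc_atLeastAtMost) (simp add: B0)
      also have "(\<Sum>i\<in>{0..<k}. (y ^ i * A i) * (w ^ (k - i) * B (k - i)))
          = (\<Sum>i\<in>{0..<k}. w ^ k * (y ^ i * B (k - i) * Cf y B i))"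
      proof (rule sum.cong[OF refl])
        fix i assume i: "i \<in> {0..<k}"
        have "w ^ i * w ^ (k - i) = w ^ k" using i by (simp add: power_add[symmetric])
        thus "(y ^ i * A i) * (w ^ (k - i) * B (k - i)) = w ^ k * (y ^ i * B (k - i) * Cf y B i)"
        proof -
          have "A i = Cf y B i * w ^ i" using less.IH[of i] i by simp
          hence "(y ^ i * A i) * (w ^ (k - i) * B (k - i)) = (w ^ i * w ^ (k - i)) * (y ^ i * B (k - i) * Cf y B i)"
            by (simp only: mult_ac)
          thus ?thesis using \<open>w ^ i * w ^ (k - i) = w ^ k\<close> by simp
        qed
      qed
      also have "\<dots> = w ^ k * (\<Sum>j\<in>{1..k}. y ^ (k - j) * B j * Cf y B (k - j))"
        by (simp add: sum_distrib_left[symmetric] reindex_rev[of _ k])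
      also have "\<dots> = w ^ k * ((1 - y ^ k) * Cf y B k)" using part_id[OF gy, of k B] False by simp
      finally have e: "(1 - y ^ k) * A k = (1 - y ^ k) * (Cf y B k * w ^ k)" by (simp add: algebra_simps)
      have k1: "k \<ge> 1" using False by simp
      obtain u where u: "(1 - y ^ k) * u = 1" using gy k1 unfolding good_def by blast
      have "u * ((1 - y ^ k) * A k) = u * ((1 - y ^ k) * (Cf y B k * w ^ k))" using e by simp
      thus ?thesis using u by (simp add: mult.assoc[symmetric] mult.commute[of u])
    qed
  qed
  show ?thesis
  proof (intro allI impI)
    fix k :: nat assume "k \<ge> 1"
    have "zpow L q (- (int k * m)) = w ^ k" unfolding w_def using zpow_nat_mult[of L q k "- m"] by simp
    thus "\<zeta> a $ k = (\<Sum>kk\<in>partitions_of k. rat_eval (R_series kk k) (zpow L q (- n)) *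
        (\<Prod>j=1..k. (\<zeta> b $ j) ^ kk j)) * zpow L q (- (int k * m))"
      using main[of k] unfolding A_def Cf_def B_def y_def by simp
  qed
qed

end
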